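(* Let $X$ be a topologically complete space and $\mathcal A$ a family of closed, locally finite, normal covers of $X$ satisfying conditions (I) and (II), and let $\Lambda$, $\mathrm{cov}_\lambda$, $F_\lambda$, $F_\infty$, $\wedge$ be as in the context. Then: (1) for each open subset $U$ of $X$, each $x\in U$ and each positive integer $n$, there exists $\lambda\in\Lambda$ such that $\bigcup\mathrm{star}^n_{\mathrm{cov}_\lambda}(x)\subset U$; (2) for each $z\in F_\infty$, the set $\bigcap_{\lambda\in\Lambda}\wedge z(\lambda)$ consists of exactly one point.
   Context: A topologically complete space is a Tychonoff space complete with respect to its finest uniformity. A closed, locally finite, normal cover $\alpha$ of $X$ is a locally finite cover by closed sets admitting a partition of unity $\{\phi_{\alpha,V}:V\in\alpha\}$ with $\mathrm{cl}(\phi_{\alpha,V}^{-1}((0,1]))\subset\mathrm{int}(V)$, $\sum_V\phi_{\alpha,V}=1$. For a cover $\alpha$ and $S\subset X$: $\mathrm{star}_\alpha(S)=\{V\in\alpha:V\cap S\neq\emptyset\}$, $\mathrm{star}^1_\alpha=\mathrm{star}_\alpha$, $\mathrm{star}^{n+1}_\alpha(S)=\{V\in\alpha:\ V\cap W\neq\emptyset\text{ for some }W\in\mathrm{star}^n_\alpha(S)\}$; $\mathrm{star}_\alpha(x)=\mathrm{star}_\alpha(\{x\})$; $\bigcup$ of a collection is the union of its members. Conditions: (I) for each open $U\subset X$ and $x\in U$ there is $\alpha\in\mathcal A$ with $\bigcup\mathrm{star}_\alpha(x)\subset U$; (II) if $f(\alpha)\in\alpha$ is chosen for each $\alpha\in\mathcal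 A$ and $\{f(\alpha)\}$ has the finite intersection property, then $\bigcap_\alpha f(\alpha)\neq\emptyset$. Construction: $\Lambda$ is the set of finite subsets of $\mathcal A$ directed by inclusion. For $\lambda\in\Lambda$, $N^{(0)}_\lambda$ is the set of functions $v$ on $\lambda$ with $v(\alpha)\in\alpha$ for all $\alpha\in\lambda$ and $\wedge v:=\bigcap_{\alpha\in\lambda}v(\alpha)\neq\emptyset$ (empty intersection meaning $X$); $\mathrm{cov}_\lambda=\{\wedge v: v\in N^{(0)}_\lambda\}$. $F_\lambda$ is the simplicial complex (weak topology) with vertex set $N^{(0)}_\lambda$ in which a finite set $\{v_1,\dots,v_k\}$ spans a simplex iff $\wedge v_i\cap\wedge v_j\neq\emptyset$ for all $i,j$. For $\lambda\subset\mu$, $\pi^\mu_\lambda:F_\mu\to F_\lambda$ is the simplicial map sending each vertex $v$ to its restriction $v|_\lambda$. $F_\infty=\varprojlim(F_\lambda,\pi^\mu_\lambda;\Lambda)$ with projections $\pi_\lambda$, and $z(\lambda)=\pi_\lambda(z)$. For $a\in F_\lambda$, $\sigma_\lambda(a)$ denotes the unique simplex of $F_\lambda$ containing $a$ in its interior (all barycentric coordinates positive), and $\wedge a=\bigcap\{\wedge v: v\text{ a vertex of }\sigma_\lambda(a)\}$ (possibly empty). *)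

theory Defs
  imports "HOL-Analysis.Analysis"
begin

definition tychonoff_space :: "'a topology \<Rightarrow> bool" where
  "tychonoff_space T \<longleftrightarrow> completely_regular_space T \<and> t1_space T"

definition uniformity_on :: "'a set \<Rightarrow> ('a \<times> 'a) set set \<Rightarrow> bool" where
  "uniformity_on X U \<longleftrightarrow>
     U \<noteq> {} \<and>
     (\<forall>E\<in>U. E \<subseteq> X \<times> X \<and> Id_on X \<subseteq> E) \<and>
     (\<forall>E\<in>U. \<forall>D. E \<subseteq> D \<and> D \<subseteq> X \<times> X \<longrightarrow> D \<in> U) \<and>
     (\<forall>E\<in>U. \<forall>D\<in>U. E \<inter> D \<in> U) \<and>
     (\<forall>E\<in>U. E\<inverse> \<in> U) \<and>
     (\<forall>E\<in>U. \<exists>D\<in>U. D O D \<subseteq> E)"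

definition compatible_uniformity :: "'a topology \<Rightarrow> ('a \<times> 'a) set set \<Rightarrow> bool" where
  "compatible_uniformity T U \<longleftrightarrow>
     uniformity_on (topspace T) U \<and>
     (\<forall>S. openin T S \<longleftrightarrow> S \<subseteq> topspace T \<and> (\<forall>x\<in>S. \<exists>E\<in>U. E `` {x} \<subseteq> S))"

definition finest_uniformity :: "'a topology \<Rightarrow> ('a \<times> 'a) set set \<Rightarrow> bool" where
  "finest_uniformity T U \<longleftrightarrow>
     compatible_uniformity T U \<and> (\<forall>V. compatible_uniformity T V \<longrightarrow> V \<subseteq> U)"

definition set_filter_on :: "'a set \<Rightarrow> 'a set set \<Rightarrow> bool" where
  "set_filter_on X F \<longleftrightarrow>
     X \<in> F \<and> {} \<notin> F \<and> (\<forall>A\<in>F. A \<subseteq> X) \<and>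
     (\<forall>A\<in>F. \<forall>B\<in>F. A \<inter> B \<in> F) \<and>
     (\<forall>A\<in>F. \<forall>B. A \<subseteq> B \<and> B \<subseteq> X \<longrightarrow> B \<in> F)"

definition uniformly_complete :: "'a topology \<Rightarrow> ('a \<times> 'a) set set \<Rightarrow> bool" where
  "uniformly_complete T U \<longleftrightarrow>
     (\<forall>F. set_filter_on (topspace T) F \<and> (\<forall>E\<in>U. \<exists>A\<in>F. A \<times> A \<subseteq> E) \<longrightarrow>
        (\<exists>x\<in>topspace T. \<forall>S. openin T S \<and> x \<in> S \<longrightarrow> S \<in> F))"

definition topologically_complete :: "'a topology \<Rightarrow> bool" where
  "topologically_complete T \<longleftrightarrow>
     tychonoff_space T \<and> (\<exists>U. finest_uniformity T U \<and> uniformly_complete T U)"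

definition closed_lf_normal_cover :: "'a topology \<Rightarrow> 'a set set \<Rightarrow> bool" where
  "closed_lf_normal_cover T \<alpha> \<longleftrightarrow>
     \<Union>\<alpha> = topspace T \<and>
     (\<forall>V\<in>\<alpha>. closedin T V) \<and>
     (\<forall>x\<in>topspace T. \<exists>N. openin T N \<and> x \<in> N \<and> finite {V\<in>\<alpha>. V \<inter> N \<noteq> {}}) \<and>
     (\<exists>\<phi> :: 'a set \<Rightarrow> 'a \<Rightarrow> real.
        (\<forall>V\<in>\<alpha>. continuous_map T euclideanreal (\<phi> V)) \<and>
        (\<forall>V\<in>\<alpha>. \<forall>x\<in>topspace T. 0 \<le> \<phi> V x \<and> \<phi> V x \<le> 1) \<and>
        (\<forall>V\<in>\<alpha>. T closure_of {x\<in>topspace T. 0 < \<phi> V x} \<subseteq> T interior_of V) \<and>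
        (\<forall>x\<in>topspace T. (\<Sum>V\<in>{V\<in>\<alpha>. x \<in> V}. \<phi> V x) = 1))"

definition star :: "'a set set \<Rightarrow> 'a set \<Rightarrow> 'a set set" where
  "star c S = {V\<in>c. V \<inter> S \<noteq> {}}"

text \<open>star_aux c k S is star^(k+1)_c(S).\<close>
primrec star_aux :: "'a set set \<Rightarrow> nat \<Rightarrow> 'a set \<Rightarrow> 'a set set" where
  "star_aux c 0 S = star c S"
| "star_aux c (Suc k) S = {V\<in>c. \<exists>W\<in>star_aux c k S. V \<inter> W \<noteq> {}}"

text \<open>star_pow c n S = star^n_c(S), meaningful for n \<ge> 1.\<close>
definition star_pow :: "'a set set \<Rightarrow> nat \<Rightarrow> 'a set \<Rightarrow> 'a set set" where
  "star_pow c n S = star_aux c (n - 1) S"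

type_synonym 'a vertex = "'a set set \<Rightarrow> 'a set"

definition Lam :: "'a set set set \<Rightarrow> 'a set set set set" where
  "Lam A = {l. finite l \<and> l \<subseteq> A}"

definition wedge :: "'a set \<Rightarrow> 'a set set set \<Rightarrow> 'a vertex \<Rightarrow> 'a set" where
  "wedge X l v = {x\<in>X. \<forall>\<alpha>\<in>l. x \<in> v \<alpha>}"

definition N0 :: "'a set \<Rightarrow> 'a set set set \<Rightarrow> 'a vertex set" where
  "N0 X l = {v \<in> Pi\<^sub>E l (\<lambda>\<alpha>. \<alpha>). wedge X l v \<noteq> {}}"

definition cov :: "'a set \<Rightarrow> 'a set set set \<Rightarrow> 'a set set" where
  "cov X l = wedge X l ` N0 X l"

definition is_simplex :: "'a set \<Rightarrow> 'a set set set \<Rightarrow> 'a vertex set \<Rightarrow> bool" where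
  "is_simplex X l S \<longleftrightarrow> finite S \<and> S \<noteq> {} \<and> S \<subseteq> N0 X l \<and>
     (\<forall>v\<in>S. \<forall>w\<in>S. wedge X l v \<inter> wedge X l w \<noteq> {})"

text \<open>Points of the geometric realisation of F_lambda, as barycentric coordinates.\<close>
definition bsupp :: "('a vertex \<Rightarrow> real) \<Rightarrow> 'a vertex set" where
  "bsupp a = {v. a v \<noteq> 0}"

definition F_pt :: "'a set \<Rightarrow> 'a set set set \<Rightarrow> ('a vertex \<Rightarrow> real) \<Rightarrow> bool" where
  "F_pt X l a \<longleftrightarrow> (\<forall>v. 0 \<le> a v) \<and> is_simplex X l (bsupp a) \<and> (\<Sum>v\<in>bsupp a. a v) = 1"

text \<open>The vertices of sigma_lambda(a) are those with positive coordinate, i.e. bsupp a.\<close>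
definition wedge_pt :: "'a set \<Rightarrow> 'a set set set \<Rightarrow> ('a vertex \<Rightarrow> real) \<Rightarrow> 'a set" where
  "wedge_pt X l a = X \<inter> (\<Inter>v\<in>bsupp a. wedge X l v)"

text \<open>The affine extension of the simplicial map v \<mapsto> v restricted to l.\<close>
definition proj :: "'a set set set \<Rightarrow> ('a vertex \<Rightarrow> real) \<Rightarrow> ('a vertex \<Rightarrow> real)" where
  "proj l a = (\<lambda>w. \<Sum>v\<in>{v\<in>bsupp a. restrict v l = w}. a v)"

definition F_inf :: "'a set \<Rightarrow> 'a set set set \<Rightarrow> ('a set set set \<Rightarrow> 'a vertex \<Rightarrow> real) set" where
  "F_inf X A = {z. (\<forall>l\<in>Lam A. F_pt X l (z l)) \<and>
                   (\<forall>l\<in>Lam A. \<forall>m\<in>Lam A. l \<subseteq> m \<longrightarrow> proj l (z m) = z l)}"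

end

theory Submission
  imports Defs
begin

lemma cov_refine:
  assumes "l' \<subseteq> l" "W \<in> cov X l"
  shows "\<exists>W'\<in>cov X l'. W \<subseteq> W'"
proof -
  obtain v where v: "v \<in> N0 X l" "W = wedge X l v" using assms(2) unfolding cov_def by blast
  have sub: "wedge X l v \<subseteq> wedge X l' (restrict v l')"
    using assms(1) unfolding wedge_def by auto
  have "restrict v l' \<in> N0 X l'"
    using v sub assms(1) unfolding N0_def by (auto simp: PiE_iff)
  then show ?thesis using sub v unfolding cov_def by blast
qed

lemma star_refine:
  assumes "l' \<subseteq> l"
  shows "W \<in> star_aux (cov X l) k S \<Longrightarrow> \<exists>W'\<in>star_aux (cov X l') k S. W \<subseteq> W'"
proof (induction k arbitrary: W)
  case 0
  then have W: "W \<in> cov X l" "W \<inter> S \<noteq> {}" by (auto simp: star_def)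
  obtain W' where "W' \<in> cov X l'" "W \<subseteq> W'" using cov_refine[OF assms W(1)] by blast
  then show ?case using W by (auto simp: star_def)
next
  case (Suc k)
  then obtain W0 where W0: "W \<in> cov X l" "W0 \<in> star_aux (cov X l) k S" "W \<inter> W0 \<noteq> {}" by auto
  obtain W0' where W0': "W0' \<in> star_aux (cov X l') k S" "W0 \<subseteq> W0'" using Suc.IH[OF W0(2)] by blast
  obtain W' where W': "W' \<in> cov X l'" "W \<subseteq> W'" using cov_refine[OF assms W0(1)] by blast
  have "W' \<inter> W0' \<noteq> {}" using W0 W0' W' by blast
  then have "W' \<in> star_aux (cov X l') (Suc k) S" using W' W0' by auto
  then show ?case using W' by blast
qed

lemma cov_sub:
  assumes "W \<in> cov X l" "\<alpha> \<in> l"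
  shows "\<exists>V. V \<in> \<alpha> \<and> W \<subseteq> V \<and> W \<subseteq> X \<and> W \<noteq> {}"
proof -
  obtain v where v: "v \<in> N0 X l" "W = wedge X l v" using assms(1) unfolding cov_def by blast
  then show ?thesis using assms(2) unfolding N0_def wedge_def by (auto simp: PiE_iff)
qed

lemma clnc_closed:
  assumes "closed_lf_normal_cover T \<alpha>" "V \<in> \<alpha>"
  shows "closedin T V"
proof -
  have "\<forall>V\<in>\<alpha>. closedin T V" using assms(1) unfolding closed_lf_normal_cover_def by (elim conjE) assumption
  then show ?thesis using assms(2) by blast
qed

lemma clnc_lf:
  assumes "closed_lf_normal_cover T \<alpha>" "x \<in> topspace T"
  shows "\<exists>N. openin T N \<and> x \<in> N \<and> finite {V\<in>\<alpha>. V \<inter> N \<noteq> {}}"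
proof -
  have "\<forall>x\<in>topspace T. \<exists>N. openin T N \<and> x \<in> N \<and> finite {V\<in>\<alpha>. V \<inter> N \<noteq> {}}"
    using assms(1) unfolding closed_lf_normal_cover_def by (elim conjE) assumption
  then show ?thesis using assms(2) by blast
qed

lemma part1:
  fixes T :: "'a topology" and A :: "'a set set set"
  assumes covers: "\<forall>\<alpha>\<in>A. closed_lf_normal_cover T \<alpha>"
    and condI: "\<forall>U x. openin T U \<and> x \<in> U \<longrightarrow> (\<exists>\<alpha>\<in>A. \<Union>(star \<alpha> {x}) \<subseteq> U)"
  shows "openin T U \<Longrightarrow> x \<in> U \<Longrightarrow> \<exists>l\<in>Lam A. \<Union>(star_aux (cov (topspace T) l) k {x}) \<subseteq> U"
proof (induction k arbitrary: U)
  case 0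
  obtain \<alpha> where a: "\<alpha> \<in> A" "\<Union>(star \<alpha> {x}) \<subseteq> U" using condI 0 by blast
  have "{\<alpha>} \<in> Lam A" using a unfolding Lam_def by auto
  moreover have "\<Union>(star_aux (cov (topspace T) {\<alpha>}) 0 {x}) \<subseteq> U"
  proof
    fix y assume "y \<in> \<Union>(star_aux (cov (topspace T) {\<alpha>}) 0 {x})"
    then obtain W where W: "W \<in> cov (topspace T) {\<alpha>}" "x \<in> W" "y \<in> W" by (auto simp: star_def)
    obtain V where "V \<in> \<alpha>" "W \<subseteq> V" using cov_sub[OF W(1)] by blast
    then have "V \<in> star \<alpha> {x}" using W by (auto simp: star_def)
    then show "y \<in> U" using a W \<open>W \<subseteq> V\<close> by blast
  qed
  ultimately show ?case by blast
next
  case (Suc k)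
  obtain \<alpha> where a: "\<alpha> \<in> A" "\<Union>(star \<alpha> {x}) \<subseteq> U" using condI Suc.prems by blast
  have xt: "x \<in> topspace T" using Suc.prems openin_subset by blast
  have cl: "closed_lf_normal_cover T \<alpha>" using covers a by blast
  then obtain N where N: "openin T N" "x \<in> N" "finite {V\<in>\<alpha>. V \<inter> N \<noteq> {}}"
    using clnc_lf[OF _ xt] by blast
  define G where "G = N - \<Union>{V\<in>\<alpha>. V \<inter> N \<noteq> {} \<and> x \<notin> V}"
  have fin: "finite {V\<in>\<alpha>. V \<inter> N \<noteq> {} \<and> x \<notin> V}"
    by (rule finite_subset[OF _ N(3)]) blast
  have "closedin T (\<Union>{V\<in>\<alpha>. V \<inter> N \<noteq> {} \<and> x \<notin> V})"
    by (rule closedin_Union[OF fin]) (simp add: clnc_closed[OF cl])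
  then have Go: "openin T G" unfolding G_def by (rule openin_diff[OF N(1)])
  have xG: "x \<in> G" unfolding G_def using N(2) by blast
  have "\<exists>l'\<in>Lam A. \<Union>(star_aux (cov (topspace T) l') k {x}) \<subseteq> G"
    by (rule Suc.IH[OF Go xG])
  then obtain l' where l': "l' \<in> Lam A" "\<Union>(star_aux (cov (topspace T) l') k {x}) \<subseteq> G"
    by (rule bexE)
  define l where "l = insert \<alpha> l'"
  have "l \<in> Lam A" using l'(1) a(1) unfolding l_def Lam_def by simp
  moreover have "\<Union>(star_aux (cov (topspace T) l) (Suc k) {x}) \<subseteq> U"
  proof
    fix y assume "y \<in> \<Union>(star_aux (cov (topspace T) l) (Suc k) {x})"
    then obtain W W0 where W: "W \<in> cov (topspace T) l" "y \<in> W"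
      "W0 \<in> star_aux (cov (topspace T) l) k {x}" "W \<inter> W0 \<noteq> {}" by auto
    obtain W0' where W0': "W0' \<in> star_aux (cov (topspace T) l') k {x}" "W0 \<subseteq> W0'"
      using star_refine[of l' l, OF _ W(3)] unfolding l_def by blast
    have W0G: "W0 \<subseteq> G" using W0' l'(2) by blast
    obtain V where V: "V \<in> \<alpha>" "W \<subseteq> V" using cov_sub[OF W(1), of \<alpha>] unfolding l_def by blast
    obtain u where u: "u \<in> W" "u \<in> W0" using W(4) by blast
    have "u \<in> G" using u W0G by blast
    then have "x \<in> V" using V u unfolding G_def by blast
    then have "V \<in> star \<alpha> {x}" using V by (auto simp: star_def)
    then show "y \<in> U" using a W V by blast
  qed
  ultimately show ?case by blast
qed

lemma supp_compat:
  assumes z: "z \<in> F_inf X A" and l: "l \<in> Lam A" and m: "m \<in> Lam A" and lm: "l \<subseteq> m"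
  shows "bsupp (z l) = (\<lambda>v. restrict v l) ` bsupp (z m)"
proof -
  have eq: "z l = proj l (z m)" using z l m lm unfolding F_inf_def by auto
  have Fm: "F_pt X m (z m)" using z m unfolding F_inf_def by auto
  then have nn: "\<And>v. 0 \<le> z m v" and fin: "finite (bsupp (z m))"
    unfolding F_pt_def is_simplex_def by auto
  have pos: "\<And>v. v \<in> bsupp (z m) \<Longrightarrow> 0 < z m v" using nn unfolding bsupp_def
    by (metis less_eq_real_def mem_Collect_eq)
  show ?thesis
  proof (rule set_eqI)
    fix w
    show "w \<in> bsupp (z l) \<longleftrightarrow> w \<in> (\<lambda>v. restrict v l) ` bsupp (z m)"
    proof
      assume "w \<in> bsupp (z l)"
      then have "proj l (z m) w \<noteq> 0" using eq unfolding bsupp_def by auto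
      then have "{v\<in>bsupp (z m). restrict v l = w} \<noteq> {}" unfolding proj_def by (metis sum.empty)
      then show "w \<in> (\<lambda>v. restrict v l) ` bsupp (z m)" by blast
    next
      assume "w \<in> (\<lambda>v. restrict v l) ` bsupp (z m)"
      then have ne: "{v\<in>bsupp (z m). restrict v l = w} \<noteq> {}" by blast
      have "0 < (\<Sum>v\<in>{v\<in>bsupp (z m). restrict v l = w}. z m v)"
        by (rule sum_pos) (use fin ne pos in auto)
      then show "w \<in> bsupp (z l)" using eq unfolding bsupp_def proj_def by auto
    qed
  qed
qed

lemma closed_finite_Int:
  assumes "finite l" "\<forall>\<alpha>\<in>l. closedin P {f\<in>topspace P. Q \<alpha> f}"
  shows "closedin P {f \<in> topspace P. \<forall>\<alpha>\<in>l. Q \<alpha> f}"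
  using assms
proof (induction l rule: finite_induct)
  case empty
  then show ?case by simp
next
  case (insert a F)
  have "{f \<in> topspace P. \<forall>\<alpha>\<in>insert a F. Q \<alpha> f} =
        {f\<in>topspace P. Q a f} \<inter> {f \<in> topspace P. \<forall>\<alpha>\<in>F. Q \<alpha> f}" by auto
  then show ?case using insert by auto
qed

theorem lemma2p2:
  fixes T :: "'a topology" and A :: "'a set set set"
  assumes tc: "topologically_complete T"
    and covers: "\<forall>\<alpha>\<in>A. closed_lf_normal_cover T \<alpha>"
    and condI: "\<forall>U x. openin T U \<and> x \<in> U \<longrightarrow> (\<exists>\<alpha>\<in>A. \<Union>(star \<alpha> {x}) \<subseteq> U)"
    and condII: "\<forall>f. (\<forall>\<alpha>\<in>A. f \<alpha> \<in> \<alpha>) \<and>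
                     (\<forall>B. B \<subseteq> A \<and> finite B \<and> B \<noteq> {} \<longrightarrow> (\<Inter>\<alpha>\<in>B. f \<alpha>) \<noteq> {})
                   \<longrightarrow> (\<exists>x\<in>topspace T. \<forall>\<alpha>\<in>A. x \<in> f \<alpha>)"
  shows "(\<forall>U x n. openin T U \<and> x \<in> U \<and> 0 < n \<longrightarrow>
            (\<exists>l\<in>Lam A. \<Union>(star_pow (cov (topspace T) l) n {x}) \<subseteq> U))
       \<and> (\<forall>z\<in>F_inf (topspace T) A.
            \<exists>!p. p \<in> (\<Inter>l\<in>Lam A. wedge_pt (topspace T) l (z l)))"
proof -
  define X where "X = topspace T"
  have P1: "\<forall>U x n. openin T U \<and> x \<in> U \<and> 0 < n \<longrightarrow>
            (\<exists>l\<in>Lam A. \<Union>(star_pow (cov (topspace T) l) n {x}) \<subseteq> U)"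
  proof (intro allI impI)
    fix U x n assume h: "openin T U \<and> x \<in> U \<and> (0::nat) < n"
    show "\<exists>l\<in>Lam A. \<Union>(star_pow (cov (topspace T) l) n {x}) \<subseteq> U"
      unfolding star_pow_def by (rule part1[OF covers condI]) (use h in simp_all)
  qed
  have "tychonoff_space T" using tc unfolding topologically_complete_def by (rule conjunct1)
  then have t1: "t1_space T" unfolding tychonoff_space_def by (rule conjunct2)
  have emptyL: "{} \<in> Lam A" unfolding Lam_def by auto
  have singL: "\<And>\<alpha>. \<alpha> \<in> A \<Longrightarrow> {\<alpha>} \<in> Lam A" unfolding Lam_def by auto
  have P2: "\<exists>!p. p \<in> (\<Inter>l\<in>Lam A. wedge_pt X l (z l))" if z: "z \<in> F_inf X A" for z
  proof -
    define S where "S l = bsupp (z l)" for l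
    have Fpt: "\<And>l. l \<in> Lam A \<Longrightarrow> F_pt X l (z l)" using z unfolding F_inf_def by auto
    have simp: "\<And>l. l \<in> Lam A \<Longrightarrow> is_simplex X l (S l)"
      using Fpt unfolding S_def F_pt_def by simp
    have Sfin: "\<And>l. l \<in> Lam A \<Longrightarrow> finite (S l)"
      using simp unfolding is_simplex_def by simp
    have Sne: "\<And>l. l \<in> Lam A \<Longrightarrow> S l \<noteq> {}"
      using simp unfolding is_simplex_def by simp
    have SN0: "\<And>l. l \<in> Lam A \<Longrightarrow> S l \<subseteq> N0 X l"
      using simp unfolding is_simplex_def by simp
    have Sint: "\<And>l v w. l \<in> Lam A \<Longrightarrow> v \<in> S l \<Longrightarrow> w \<in> S l \<Longrightarrow> wedge X l v \<inter> wedge X l w \<noteq> {}"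
      using simp unfolding is_simplex_def by simp
    have Scomp: "\<And>l m. l \<in> Lam A \<Longrightarrow> m \<in> Lam A \<Longrightarrow> l \<subseteq> m \<Longrightarrow> S l = (\<lambda>v. restrict v l) ` S m"
      unfolding S_def using supp_compat[OF z] by blast
    have SPi: "\<And>l v. l \<in> Lam A \<Longrightarrow> v \<in> S l \<Longrightarrow> v \<in> Pi\<^sub>E l (\<lambda>\<alpha>. \<alpha>) \<and> wedge X l v \<noteq> {}"
      using SN0 unfolding N0_def by blast
    define C where "C \<alpha> = (\<lambda>v. v \<alpha>) ` S {\<alpha>}" for \<alpha>
    define P where "P = product_topology (\<lambda>\<alpha>. discrete_topology (C \<alpha>)) A"
    have tsP: "topspace P = Pi\<^sub>E A C" unfolding P_def by simp
    have cP: "compact_space P" unfolding P_def compact_space_product_topology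
      using Sfin singL unfolding C_def by (auto simp: compact_space_discrete_topology)
    define K where "K l = {f \<in> topspace P. restrict f l \<in> S l}" for l
    have coord: "closedin P {f \<in> topspace P. f \<alpha> = c}" if "\<alpha> \<in> A" for \<alpha> c
    proof -
      have "closedin P {f \<in> topspace P. f \<alpha> \<in> {c} \<inter> C \<alpha>}"
        unfolding P_def
        by (rule closedin_continuous_map_preimage[OF continuous_map_product_projection[OF that]]) auto
      moreover have "{f \<in> topspace P. f \<alpha> \<in> {c} \<inter> C \<alpha>} = {f \<in> topspace P. f \<alpha> = c}"
        using that unfolding tsP by auto
      ultimately show ?thesis by simp
    qed
    have Kcl: "closedin P (K l)" if l: "l \<in> Lam A" for l
    proof -
      have lA: "l \<subseteq> A" "finite l" using l unfolding Lam_def by auto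
      have "K l = \<Union>((\<lambda>v. {f \<in> topspace P. \<forall>\<alpha>\<in>l. f \<alpha> = v \<alpha>}) ` S l)"
      proof (rule set_eqI)
        fix f
        show "f \<in> K l \<longleftrightarrow> f \<in> \<Union>((\<lambda>v. {f \<in> topspace P. \<forall>\<alpha>\<in>l. f \<alpha> = v \<alpha>}) ` S l)"
        proof
          assume "f \<in> K l"
          then show "f \<in> \<Union>((\<lambda>v. {f \<in> topspace P. \<forall>\<alpha>\<in>l. f \<alpha> = v \<alpha>}) ` S l)"
            unfolding K_def by (intro UN_I[of "restrict f l"]) auto
        next
          assume "f \<in> \<Union>((\<lambda>v. {f \<in> topspace P. \<forall>\<alpha>\<in>l. f \<alpha> = v \<alpha>}) ` S l)"
          then obtain v where v: "v \<in> S l" "f \<in> topspace P" "\<forall>\<alpha>\<in>l. f \<alpha> = v \<alpha>" by blast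
          have "v \<in> Pi\<^sub>E l (\<lambda>\<alpha>. \<alpha>)" using SPi[OF l v(1)] by blast
          then have "restrict f l = v" using v(3) by (auto simp: fun_eq_iff PiE_def extensional_def)
          then show "f \<in> K l" using v unfolding K_def by auto
        qed
      qed
      moreover have cv: "closedin P {f \<in> topspace P. \<forall>\<alpha>\<in>l. f \<alpha> = v \<alpha>}" for v
        by (rule closed_finite_Int[OF lA(2)]) (use coord lA(1) in blast)
      moreover have "closedin P (\<Union>((\<lambda>v. {f \<in> topspace P. \<forall>\<alpha>\<in>l. f \<alpha> = v \<alpha>}) ` S l))"
        by (rule closedin_Union) (use Sfin[OF l] cv in auto)
      ultimately show ?thesis by simp
    qed
    have fip: "\<Inter>F \<noteq> {}" if F: "finite F" "F \<subseteq> K ` Lam A" for F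
    proof -
      obtain L where L: "L \<subseteq> Lam A" "finite L" "F = K ` L" using F finite_subset_image by metis
      define m where "m = \<Union>L"
      have m: "m \<in> Lam A" using L unfolding m_def Lam_def by auto
      obtain v where v: "v \<in> S m" using Sne[OF m] by blast
      define g where "g \<alpha> = (if \<alpha> \<in> A then (if \<alpha> \<in> m then v \<alpha> else (SOME w. w \<in> S {\<alpha>}) \<alpha>) else undefined)" for \<alpha>
      have mA: "m \<subseteq> A" using m unfolding Lam_def by auto
      have gP: "g \<in> topspace P"
        unfolding tsP
      proof (rule PiE_I)
        fix \<alpha> assume a: "\<alpha> \<in> A"
        show "g \<alpha> \<in> C \<alpha>"
        proof (cases "\<alpha> \<in> m")
          case True
          then have "restrict v {\<alpha>} \<in> S {\<alpha>}" using Scomp[OF singL[OF a] m] v by auto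
          then show ?thesis using True a unfolding g_def C_def by (intro image_eqI[of _ _ "restrict v {\<alpha>}"]) auto
        next
          case False
          have "(SOME w. w \<in> S {\<alpha>}) \<in> S {\<alpha>}" using Sne[OF singL[OF a]] by (simp add: some_in_eq)
          then show ?thesis using False a unfolding g_def C_def by auto
        qed
      next
        fix \<alpha> assume "\<alpha> \<notin> A" then show "g \<alpha> = undefined" unfolding g_def by simp
      qed
      have "g \<in> K l" if "l \<in> L" for l
      proof -
        have lm: "l \<subseteq> m" using that unfolding m_def by auto
        have "restrict g l = restrict v l" using lm mA unfolding g_def by (auto simp: fun_eq_iff)
        moreover have "restrict v l \<in> S l" using Scomp[of l m] L that m lm v by auto
        ultimately show ?thesis using gP unfolding K_def by simp
      qed
      then show ?thesis using L by auto
    qed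
    have "\<Inter>(K ` Lam A) \<noteq> {}"
      using cP[unfolded compact_space_fip, rule_format, of "K ` Lam A"] Kcl fip by blast
    then obtain f where f: "\<And>l. l \<in> Lam A \<Longrightarrow> f \<in> K l" by blast
    have fS: "\<And>l. l \<in> Lam A \<Longrightarrow> restrict f l \<in> S l" using f unfolding K_def by auto
    have fa: "\<forall>\<alpha>\<in>A. f \<alpha> \<in> \<alpha>"
    proof
      fix \<alpha> assume a: "\<alpha> \<in> A"
      have "restrict f {\<alpha>} \<in> Pi\<^sub>E {\<alpha>} (\<lambda>\<alpha>. \<alpha>)" using SPi[OF singL[OF a] fS[OF singL[OF a]]] by blast
      then show "f \<alpha> \<in> \<alpha>" by auto
    qed
    have ffip: "\<forall>B. B \<subseteq> A \<and> finite B \<and> B \<noteq> {} \<longrightarrow> (\<Inter>\<alpha>\<in>B. f \<alpha>) \<noteq> {}"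
    proof (intro allI impI)
      fix B assume B: "B \<subseteq> A \<and> finite B \<and> B \<noteq> {}"
      then have BL: "B \<in> Lam A" unfolding Lam_def by auto
      obtain y where "y \<in> wedge X B (restrict f B)" using SPi[OF BL fS[OF BL]] by blast
      then have "y \<in> (\<Inter>\<alpha>\<in>B. f \<alpha>)" unfolding wedge_def by auto
      then show "(\<Inter>\<alpha>\<in>B. f \<alpha>) \<noteq> {}" by blast
    qed
    obtain p where p: "p \<in> X" "\<forall>\<alpha>\<in>A. p \<in> f \<alpha>" using condII[rule_format, of f] fa ffip unfolding X_def by blast
    have pw: "p \<in> wedge X m (restrict f m)" if "m \<in> Lam A" for m
      using p that unfolding wedge_def Lam_def by auto
    have pin: "p \<in> wedge_pt X l (z l)" if l: "l \<in> Lam A" for l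
    proof -
      have "p \<in> wedge X l v" if v: "v \<in> S l" for v
      proof (rule ccontr)
        assume "p \<notin> wedge X l v"
        then obtain \<alpha> where a: "\<alpha> \<in> l" "p \<notin> v \<alpha>" using p(1) unfolding wedge_def by auto
        have vP: "v \<in> Pi\<^sub>E l (\<lambda>\<alpha>. \<alpha>)" using SPi[OF l v] by blast
        have aA: "\<alpha> \<in> A" using a l unfolding Lam_def by auto
        have "v \<alpha> \<in> \<alpha>" using vP a by auto
        then have "closedin T (v \<alpha>)" using covers aA clnc_closed by blast
        then have Uo: "openin T (X - v \<alpha>)" unfolding X_def by auto
        have h: "openin T (X - v \<alpha>) \<and> p \<in> X - v \<alpha> \<and> (0::nat) < 2" using Uo p(1) a(2) by simp
        have "\<exists>l0\<in>Lam A. \<Union>(star_pow (cov (topspace T) l0) 2 {p}) \<subseteq> X - v \<alpha>"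
          by (rule P1[rule_format, OF h])
        moreover have "\<And>c. star_pow c 2 {p} = star_aux c 1 {p}" by (simp add: star_pow_def)
        ultimately have "\<exists>l0\<in>Lam A. \<Union>(star_aux (cov X l0) 1 {p}) \<subseteq> X - v \<alpha>"
          unfolding X_def by simp
        then obtain l0 where l0: "l0 \<in> Lam A" "\<Union>(star_aux (cov X l0) 1 {p}) \<subseteq> X - v \<alpha>"
          by (rule bexE)
        define m where "m = l0 \<union> l"
        have m: "m \<in> Lam A" using l0 l unfolding m_def Lam_def by auto
        have lm: "l \<subseteq> m" unfolding m_def by auto
        obtain v'' where v'': "v'' \<in> S m" "v = restrict v'' l" using v unfolding Scomp[OF l m lm] by blast
        have wS: "restrict f m \<in> S m" using fS[OF m] .
        have i: "wedge X m (restrict f m) \<inter> wedge X m v'' \<noteq> {}" using Sint[OF m wS v''(1)] .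
        have c1: "wedge X m (restrict f m) \<in> cov X m" using wS SN0[OF m] unfolding cov_def by auto
        have c2: "wedge X m v'' \<in> cov X m" using v''(1) SN0[OF m] unfolding cov_def by auto
        have "wedge X m (restrict f m) \<in> star_aux (cov X m) 0 {p}" using c1 pw[OF m] by (auto simp: star_def)
        then have "wedge X m v'' \<in> star_aux (cov X m) 1 {p}"
          unfolding One_nat_def star_aux.simps using c2 i by blast
        moreover have lm0: "l0 \<subseteq> m" unfolding m_def by blast
        ultimately have "\<exists>W'\<in>star_aux (cov X l0) 1 {p}. wedge X m v'' \<subseteq> W'"
          using star_refine[OF lm0] by blast
        then obtain W' where W': "W' \<in> star_aux (cov X l0) 1 {p}" "wedge X m v'' \<subseteq> W'"
          by (rule bexE)
        have sub: "wedge X m v'' \<subseteq> X - v \<alpha>"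
          using W'(2) Union_upper[OF W'(1)] l0(2) by (meson subset_trans)
        obtain y where y: "y \<in> wedge X m v''" using SPi[OF m v''(1)] by blast
        have "y \<in> v'' \<alpha>" using y a lm unfolding wedge_def by auto
        moreover have "v'' \<alpha> = v \<alpha>" using v''(2) a by simp
        ultimately show False using sub y by blast
      qed
      then show ?thesis using p(1) unfolding wedge_pt_def S_def by auto
    qed
    have uniq: "q = p" if q: "q \<in> (\<Inter>l\<in>Lam A. wedge_pt X l (z l))" for q
    proof (rule ccontr)
      assume qp: "q \<noteq> p"
      have "q \<in> wedge_pt X {} (z {})" by (rule INT_D[OF q emptyL])
      then have qX: "q \<in> X" unfolding wedge_pt_def by blast
      have pT: "p \<in> topspace T" using p(1) unfolding X_def .
      have qT: "q \<in> topspace T" using qX unfolding X_def .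
      have pq': "p \<noteq> q" using qp by simp
      have "\<exists>U. openin T U \<and> p \<in> U \<and> q \<notin> U"
        by (rule t1[unfolded t1_space_def, rule_format, OF pT qT pq'])
      then obtain U where U: "openin T U" "p \<in> U" "q \<notin> U" by blast
      have "\<exists>\<alpha>\<in>A. \<Union>(star \<alpha> {p}) \<subseteq> U" by (rule condI[rule_format]) (use U in simp)
      then obtain \<alpha> where a: "\<alpha> \<in> A" "\<Union>(star \<alpha> {p}) \<subseteq> U" by (rule bexE)
      have L: "{\<alpha>} \<in> Lam A" using singL[OF a(1)] .
      obtain v where v: "v \<in> S {\<alpha>}" using Sne[OF L] by blast
      have qw: "q \<in> wedge_pt X {\<alpha>} (z {\<alpha>})" by (rule INT_D[OF q L])
      have "p \<in> wedge X {\<alpha>} v" "q \<in> wedge X {\<alpha>} v"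
        using pin[OF L] qw v unfolding wedge_pt_def S_def by blast+
      then have pq: "p \<in> v \<alpha>" "q \<in> v \<alpha>" unfolding wedge_def by auto
      have "v \<alpha> \<in> \<alpha>" using SPi[OF L v] by auto
      then have "v \<alpha> \<in> star \<alpha> {p}" using pq by (auto simp: star_def)
      then show False using a pq U by blast
    qed
    show ?thesis
    proof (rule ex1I[of _ p])
      show "p \<in> (\<Inter>l\<in>Lam A. wedge_pt X l (z l))" using pin by blast
    next
      fix q assume "q \<in> (\<Inter>l\<in>Lam A. wedge_pt X l (z l))"
      then show "q = p" by (rule uniq)
    qed
  qed
  show ?thesis
  proof (intro conjI)
    show "\<forall>U x n. openin T U \<and> x \<in> U \<and> 0 < n \<longrightarrow>
            (\<exists>l\<in>Lam A. \<Union>(star_pow (cov (topspace T) l) n {x}) \<subseteq> U)" by (rule P1)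
    show "\<forall>z\<in>F_inf (topspace T) A. \<exists>!p. p \<in> (\<Inter>l\<in>Lam A. wedge_pt (topspace T) l (z l))"
      using P2 unfolding X_def by blast
  qed
qed

end
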